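(* Let $\Sigma$ be an alphabet with $|\Sigma|\geq 3$ and $n\geq 1$. If $g\colon\mathcal{T}(\Sigma)^n\to\mathcal{T}(\Sigma)$ is WCP and $g(\Sigma^n)\subseteq\Sigma$, then the restriction of $g$ to $\Sigma^n$ is either a constant function or a projection $\pi_i^n$ (for some $i\in\{1,\ldots,n\}$, $\pi_i^n(a_1,\ldots,a_n)=a_i$).
   Context: Let $\Sigma$ be an alphabet not containing $0,1$. A binary tree over $\Sigma$ is a finite set $t \subseteq \{0,1\}^*\Sigma$ such that for any $ua, vb \in t$ with $ua \neq vb$, $u$ is not a prefix of $v$ and $v$ is not a prefix of $u$; $\mathcal{T}(\Sigma)$ is the set of such trees, $\mathbf 0=\emptyset$, each letter $a$ is identified with $\{a\}$, and $t\star t' = 0.t\cup 1.t'$. Every map $h\colon\Sigma\to\mathcal{T}(\Sigma)$ extends uniquely to an endomorphism of $\langle\mathcal{T}(\Sigma),\star\rangle$, still denoted $h$. A function $g\colon\mathcal{T}(\Sigma)^n\to\mathcal{T}(\Sigma)$ is WCP if for every idempotent mapping $h\colon\Sigma\to\Sigma$ and all $\vec u,\vec v\in\Sigma^n$, $h(\vec u)=h(\vec v)$ implies $h(g(\vec u))=h(g(\vec v))$, where $h(\langle u_1,\ldots,u_n\rangle)=\langle h(u_1),\ldots,h(u_n)\rangle$. *)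

theory Defs
  imports Main "HOL-Library.Sublist"
begin

text \<open>A word in {0,1}*\<Sigma> is represented as a pair (u, a) with u :: bool list
  (False = 0, True = 1) and a a letter.  A binary tree is a finite prefix-free set.\<close>

type_synonym 'a tree = "(bool list \<times> 'a) set"

definition is_tree :: "'a tree \<Rightarrow> bool" where
  "is_tree t \<longleftrightarrow> finite t \<and>
     (\<forall>(u,a)\<in>t. \<forall>(v,b)\<in>t. (u,a) \<noteq> (v,b) \<longrightarrow> \<not> prefix u v \<and> \<not> prefix v u)"

definition leaf :: "'a \<Rightarrow> 'a tree" where
  "leaf a = {([], a)}"

definition tstar :: "'a tree \<Rightarrow> 'a tree \<Rightarrow> 'a tree" where
  "tstar t t' = {(False # u, a) | u a. (u,a) \<in> t} \<union> {(True # u, a) | u a. (u,a) \<in> t'}"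

text \<open>Unique star-endomorphism extending h : \<Sigma> \<Rightarrow> T(\<Sigma>) (substitution at the leaves).\<close>
definition hext :: "('a \<Rightarrow> 'a tree) \<Rightarrow> 'a tree \<Rightarrow> 'a tree" where
  "hext h t = {(u @ w, b) | u a w b. (u,a) \<in> t \<and> (w,b) \<in> h a}"

definition WCP :: "nat \<Rightarrow> ('a tree list \<Rightarrow> 'a tree) \<Rightarrow> bool" where
  "WCP n g \<longleftrightarrow> (\<forall>h :: 'a \<Rightarrow> 'a. h \<circ> h = h \<longrightarrow>
     (\<forall>u v. length u = n \<and> length v = n \<and> map h u = map h v \<longrightarrow>
        hext (leaf \<circ> h) (g (map leaf u)) = hext (leaf \<circ> h) (g (map leaf v))))"

end

theory Submission
  imports Defs
begin

lemma hext_leaf: "hext (leaf \<circ> h) (leaf a) = leaf (h a)"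
  unfolding hext_def leaf_def by auto

lemma leaf_inj: "leaf a = leaf b \<longleftrightarrow> a = b"
  unfolding leaf_def by auto

lemma three_ex:
  assumes "card (UNIV :: 'a::finite set) \<ge> 3"
  shows "\<exists>c::'a. c \<noteq> a \<and> c \<noteq> b"
proof (rule ccontr)
  assume "\<not> ?thesis"
  then have "UNIV \<subseteq> {a,b}" by auto
  then have "card (UNIV :: 'a set) \<le> card {a,b}" by (simp add: card_mono)
  also have "\<dots> \<le> 2" by (simp add: card_insert_if)
  finally show False using assms by simp
qed

theorem mainTheorem9:
  fixes g :: "'a::finite tree list \<Rightarrow> 'a tree" and n :: nat
  assumes "card (UNIV :: 'a set) \<ge> 3"
    and "n \<ge> 1"
    and "\<forall>ts. length ts = n \<and> (\<forall>t\<in>set ts. is_tree t) \<longrightarrow> is_tree (g ts)"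
    and "WCP n g"
    and "\<forall>u. length u = n \<longrightarrow> (\<exists>a. g (map leaf u) = leaf a)"
  shows "(\<exists>c. \<forall>u. length u = n \<longrightarrow> g (map leaf u) = c)
       \<or> (\<exists>i<n. \<forall>u. length u = n \<longrightarrow> g (map leaf u) = leaf (u ! i))"
proof -
  have three: "\<And>a b. \<exists>c::'a. c \<noteq> a \<and> c \<noteq> b" using three_ex[OF assms(1)] by blast
  define fl where "fl u = (SOME a. g (map leaf u) = leaf a)" for u
  have fl: "g (map leaf u) = leaf (fl u)" if "length u = n" for u
    unfolding fl_def using assms(5) that by (metis (mono_tags, lifting) someI_ex)
  define f where "f F = fl (map F [0..<n])" for F :: "nat \<Rightarrow> 'a"
  have fu: "fl u = f (\<lambda>i. u ! i)" if "length u = n" for u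
    unfolding f_def using that by (metis map_nth)
  have Q: "f F = f G \<or> (f F \<in> S \<and> f G \<in> S)"
    if s: "s \<in> S" and agr: "\<forall>i<n. F i = G i \<or> (F i \<in> S \<and> G i \<in> S)" for F G S s
  proof -
    define h where "h x = (if x \<in> S then s else x)" for x
    have hh: "h \<circ> h = h" using s by (auto simp: h_def)
    have "map h (map F [0..<n]) = map h (map G [0..<n])"
      using agr by (auto simp: h_def)
    then have "hext (leaf \<circ> h) (g (map leaf (map F [0..<n]))) = hext (leaf \<circ> h) (g (map leaf (map G [0..<n])))"
      using assms(4) hh unfolding WCP_def
      by (metis (no_types, lifting) length_map length_upt minus_nat.diff_0)
    moreover have "g (map leaf (map F [0..<n])) = leaf (f F)" "g (map leaf (map G [0..<n])) = leaf (f G)"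
      unfolding f_def by (rule fl, simp)+
    ultimately have "h (f F) = h (f G)" by (simp only: hext_leaf leaf_inj)
    then show ?thesis using s by (auto simp: h_def split: if_splits)
  qed
  show ?thesis
  proof (cases "\<exists>F. f F \<notin> F ` {..<n}")
    case True
    then obtain F0 where F0: "f F0 \<notin> F0 ` {..<n}" by blast
    define b where "b = f F0"
    have Fb: "f G = b" if "\<forall>i<n. G i \<noteq> b" for G
    proof -
      obtain c where c: "c \<noteq> b" using three by blast
      have "\<forall>i<n. F0 i = G i \<or> (F0 i \<in> -{b} \<and> G i \<in> -{b})"
        using F0 that unfolding b_def by (metis ComplI image_eqI lessThan_iff singletonD)
      from Q[OF _ this, of c] c show ?thesis unfolding b_def by auto
    qed
    have all: "f G = b" for G
    proof -
      have one: "f G \<in> {b, c}" if c: "c \<noteq> b" for c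
      proof -
        define Gc where "Gc i = (if G i = b then c else G i)" for i
        have "f Gc = b" using Fb c by (auto simp: Gc_def)
        moreover have "\<forall>i<n. G i = Gc i \<or> (G i \<in> {b,c} \<and> Gc i \<in> {b,c})"
          by (auto simp: Gc_def)
        from Q[OF _ this, of b] have "f G = f Gc \<or> (f G \<in> {b,c})" by auto
        ultimately show ?thesis by auto
      qed
      obtain c d where "c \<noteq> b" "d \<noteq> b" "c \<noteq> d" using three by metis
      then show ?thesis using one[of c] one[of d] by auto
    qed
    have "\<forall>u. length u = n \<longrightarrow> g (map leaf u) = leaf b"
      using fl fu all by simp
    then show ?thesis by blast
  next
    case False
    then have cons: "\<And>F. f F \<in> F ` {..<n}" by blast
    define ind where "ind a x I = (\<lambda>i::nat. if i \<in> I then a else x)" for a x :: 'a and I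
    have L1: "f G = a" if "f F = a" "\<forall>i<n. (F i = a \<longleftrightarrow> G i = a)" for F G a
    proof -
      obtain c where c: "c \<noteq> a" using three by blast
      have "\<forall>i<n. F i = G i \<or> (F i \<in> -{a} \<and> G i \<in> -{a})" using that(2) by auto
      from Q[OF _ this, of c] c that(1) show ?thesis by auto
    qed
    have indr: "f (ind a c I) \<in> {a, c}" for a c I
      using cons[of "ind a c I"] by (auto simp: ind_def split: if_splits)
    have L2: "f (ind a c I) = a \<longleftrightarrow> f (ind b c I) = b" if "c \<noteq> a" "c \<noteq> b" for a b c I
    proof -
      have "f (ind a c I) = c \<longleftrightarrow> f (ind b c I) = c"
        using L1[of "ind a c I" c "ind b c I"] L1[of "ind b c I" c "ind a c I"] that
        by (auto simp: ind_def)
      then show ?thesis using indr[of a c I] indr[of b c I] that by auto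
    qed
    obtain a0 b0 :: 'a where ab: "a0 \<noteq> b0" using three by metis
    define W where "W I = (f (ind a0 b0 I) = a0)" for I
    have LW: "f F = a \<longleftrightarrow> W {i. F i = a}" for F a
    proof -
      obtain c where c: "c \<noteq> a" "c \<noteq> a0" using three by blast
      let ?I = "{i. F i = a}"
      have "f F = a \<longleftrightarrow> f (ind a c ?I) = a"
        using L1[of F a "ind a c ?I"] L1[of "ind a c ?I" a F] c by (auto simp: ind_def)
      also have "\<dots> \<longleftrightarrow> f (ind a0 c ?I) = a0" using L2 c by blast
      also have "\<dots> \<longleftrightarrow> f (ind a0 b0 ?I) = a0"
        using L1[of "ind a0 c ?I" a0 "ind a0 b0 ?I"] L1[of "ind a0 b0 ?I" a0 "ind a0 c ?I"] c ab
        by (auto simp: ind_def)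
      finally show ?thesis unfolding W_def .
    qed
    have Wc: "W (-I) \<longleftrightarrow> \<not> W I" for I
    proof -
      have "{i. ind a0 b0 I i = b0} = -I" using ab by (auto simp: ind_def)
      then have "f (ind a0 b0 I) = b0 \<longleftrightarrow> W (-I)" using LW by metis
      then show ?thesis using indr[of a0 b0 I] ab unfolding W_def by auto
    qed
    have W0: "\<not> W {}"
    proof -
      have "ind a0 b0 {} = (\<lambda>i. b0)" by (simp add: ind_def)
      then have "f (ind a0 b0 {}) = b0" using cons[of "ind a0 b0 {}"] by auto
      then show ?thesis using ab unfolding W_def by auto
    qed
    have Wr: "W I \<longleftrightarrow> W (I \<inter> {..<n})" for I
      unfolding W_def
      using L1[of "ind a0 b0 I" a0 "ind a0 b0 (I \<inter> {..<n})"]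
        L1[of "ind a0 b0 (I \<inter> {..<n})" a0 "ind a0 b0 I"] ab
      by (auto simp: ind_def)
    have Wup: "W J" if "I \<subseteq> J" "W I" for I J
    proof -
      obtain c where c: "c \<noteq> a0" "c \<noteq> b0" using three by blast
      define u where "u i = (if i \<in> I then a0 else if i \<in> J then b0 else c)" for i
      have "{i. u i = a0} = I" using c ab by (auto simp: u_def)
      then have fu0: "f u = a0" using LW that(2) by metis
      have "\<forall>i<n. u i = ind a0 c J i \<or> (u i \<in> {a0,b0} \<and> ind a0 c J i \<in> {a0,b0})"
        using that(1) by (auto simp: u_def ind_def)
      from Q[OF _ this, of a0] have "f u = f (ind a0 c J) \<or> f (ind a0 c J) \<in> {a0,b0}" by auto
      then have "f (ind a0 c J) = a0" using fu0 indr[of a0 c J] c by auto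
      moreover have "{i. ind a0 c J i = a0} = J" using c by (auto simp: ind_def)
      ultimately show ?thesis using LW by metis
    qed
    have Wint: "W (I \<inter> J)" if "W I" "W J" for I J
    proof -
      obtain c where c: "c \<noteq> a0" "c \<noteq> b0" using three by blast
      define u where "u i = (if i \<in> I \<inter> J then a0 else if i \<in> I then b0 else c)" for i
      have "{i. u i = c} = -I" using c ab by (auto simp: u_def)
      then have nc: "f u \<noteq> c" using LW Wc that(1) by metis
      have "{i. u i = b0} = I - J" using c ab by (auto simp: u_def)
      moreover have "\<not> W (I - J)"
        using Wup[of "I - J" "-J"] Wc[of J] that(2) by auto
      ultimately have nb: "f u \<noteq> b0" using LW by metis
      have "f u \<in> u ` {..<n}" by (rule cons)
      then have "f u \<in> {a0, b0, c}" by (auto simp: u_def)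
      then have "f u = a0" using nb nc by auto
      moreover have "{i. u i = a0} = I \<inter> J" using c ab by (auto simp: u_def)
      ultimately show ?thesis using LW by metis
    qed
    define P where "P I = (I \<subseteq> {..<n} \<and> W I)" for I
    have "P {..<n}" unfolding P_def using Wr[of UNIV] Wc[of "{}"] W0 by simp
    then obtain I where PI: "P I" and Imin: "\<forall>J. P J \<longrightarrow> card I \<le> card J"
      using ex_has_least_nat[of P "{..<n}" card] by blast
    have "I \<noteq> {}" using PI W0 unfolding P_def by auto
    then obtain k where k: "k \<in> I" by blast
    have kn: "k < n" using PI k unfolding P_def by auto
    have Wk: "W {k}"
    proof (rule ccontr)
      assume "\<not> W {k}"
      then have "W (-{k})" using Wc by blast
      then have "W (I \<inter> -{k})" using Wint PI unfolding P_def by blast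
      then have "P (I - {k})" using PI unfolding P_def by (auto simp add: Diff_eq)
      moreover have "card (I - {k}) < card I"
        using PI k unfolding P_def by (meson card_Diff1_less finite_lessThan finite_subset)
      ultimately show False using Imin by fastforce
    qed
    have proj: "f F = F k" for F
      using LW[of F "F k"] Wup[of "{k}" "{i. F i = F k}"] Wk by auto
    have "\<forall>u. length u = n \<longrightarrow> g (map leaf u) = leaf (u ! k)"
      using fl fu proj by simp
    then show ?thesis using kn by blast
  qed
qed

end
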